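(* Let $k,r\in\mathbb N$, let $A\subseteq\Lambda_k^r$, $x\in\Lambda_k^r$ and $t>0$. If $(A^{-1}A)\cap U_t(x)=\varnothing$, then $|A|/|\Lambda_k^r|\le\exp(-t^2/4r)$.
   Context: $\Lambda_k=\{\lambda\in\mathbb C:\lambda^k=1\}$ is the multiplicative group of $k$-th roots of unity, and $\Lambda_k^r$ is its $r$-th Cartesian power with coordinatewise multiplication. For $A\subseteq\Lambda_k^r$, $A^{-1}A=\{a^{-1}b:a,b\in A\}$. Let $d_0$ be one half of Euclidean distance on $\Lambda_k$, and for $x,y\in\Lambda_k^r$ let $d(x,y)=\sum_{j=1}^r d_0(x_j,y_j)$. The Hamming ball is $U_t(x)=\{y\in\Lambda_k^r:d(x,y)\le t\}$. *)

theory Defs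
  imports Complex_Main "HOL-Library.FuncSet"
begin

definition roots_unity :: "nat \<Rightarrow> complex set" where
  "roots_unity k = {z. z ^ k = 1}"

definition cube :: "nat \<Rightarrow> nat \<Rightarrow> (nat \<Rightarrow> complex) set" where
  "cube k r = PiE {..<r} (\<lambda>_. roots_unity k)"

definition quot_vec :: "nat \<Rightarrow> (nat \<Rightarrow> complex) \<Rightarrow> (nat \<Rightarrow> complex) \<Rightarrow> (nat \<Rightarrow> complex)" where
  "quot_vec r a b = (\<lambda>j\<in>{..<r}. inverse (a j) * b j)"

definition diff_set :: "nat \<Rightarrow> (nat \<Rightarrow> complex) set \<Rightarrow> (nat \<Rightarrow> complex) set" where
  "diff_set r A = {quot_vec r a b | a b. a \<in> A \<and> b \<in> A}"

definition d0 :: "complex \<Rightarrow> complex \<Rightarrow> real" where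
  "d0 u v = cmod (u - v) / 2"

definition dist_h :: "nat \<Rightarrow> (nat \<Rightarrow> complex) \<Rightarrow> (nat \<Rightarrow> complex) \<Rightarrow> real" where
  "dist_h r x y = (\<Sum>j<r. d0 (x j) (y j))"

definition ball_h :: "nat \<Rightarrow> nat \<Rightarrow> real \<Rightarrow> (nat \<Rightarrow> complex) \<Rightarrow> (nat \<Rightarrow> complex) set" where
  "ball_h k r t x = {y \<in> cube k r. dist_h r x y \<le> t}"

end

theory Submission
  imports Defs "HOL-Probability.Hoeffding"
begin

definition PP :: "nat \<Rightarrow> complex set \<Rightarrow> (nat \<Rightarrow> complex) set" where
  "PP n S = PiE {..<n} (\<lambda>_. S)"

definition DD :: "nat \<Rightarrow> (nat \<Rightarrow> complex) \<Rightarrow> (nat \<Rightarrow> complex) set \<Rightarrow> real" where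
  "DD n y A = Min (dist_h n y ` A)"

definition Phi :: "nat \<Rightarrow> complex set \<Rightarrow> real \<Rightarrow> (nat \<Rightarrow> complex) set \<Rightarrow> real" where
  "Phi n S l A = (\<Sum>y\<in>PP n S. exp (l * DD n y A))"

definition CC :: "real \<Rightarrow> real" where
  "CC l = (1 + exp l)^2 / (4 * exp l)"

lemma PP_Suc: "PP (Suc n) S = (\<lambda>(s, f). f(n := s)) ` (S \<times> PP n S)"
  unfolding PP_def lessThan_Suc by (rule PiE_insert_eq)

lemma PP_inj: "inj_on (\<lambda>(s, f). f(n := s)) (S \<times> PP n S)"
  unfolding PP_def by (rule inj_combinator) auto

lemma finite_PP: "finite S \<Longrightarrow> finite (PP n S)"
  unfolding PP_def by (auto intro: finite_PiE)

lemma card_PP: "finite S \<Longrightarrow> card (PP n S) = card S ^ n"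
  unfolding PP_def by (simp add: card_PiE)

lemma PP_arb: "f \<in> PP n S \<Longrightarrow> f n = undefined"
  unfolding PP_def by (auto intro: PiE_arb)

lemma sum_PP_Suc: "(\<Sum>g\<in>PP (Suc n) S. h g) = (\<Sum>s\<in>S. \<Sum>f\<in>PP n S. h (f(n:=s)))"
  by (subst PP_Suc, subst sum.reindex[OF PP_inj]) (simp add: sum.cartesian_product split_def)

lemma dist_upd: "dist_h (Suc n) (f(n:=s)) (g(n:=s')) = dist_h n f g + d0 s s'"
proof -
  have "(\<Sum>j<n. d0 ((f(n:=s)) j) ((g(n:=s')) j)) = (\<Sum>j<n. d0 (f j) (g j))"
    by (rule sum.cong) auto
  then show ?thesis unfolding dist_h_def by simp
qed

lemma d0_self [simp]: "d0 u u = 0" by (simp add: d0_def)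
lemma d0_nonneg: "d0 u v \<ge> 0" by (simp add: d0_def)

lemma dist_h_nonneg: "dist_h n f g \<ge> 0"
  unfolding dist_h_def by (intro sum_nonneg) (simp add: d0_nonneg)

lemma DD_le: "finite A \<Longrightarrow> a \<in> A \<Longrightarrow> DD n y A \<le> dist_h n y a"
  unfolding DD_def by (rule Min_le) auto

lemma DD_ex: "finite A \<Longrightarrow> A \<noteq> {} \<Longrightarrow> \<exists>a\<in>A. DD n y A = dist_h n y a"
proof -
  assume "finite A" "A \<noteq> {}"
  then have "Min (dist_h n y ` A) \<in> dist_h n y ` A" by (intro Min_in) auto
  then show ?thesis unfolding DD_def by auto
qed

lemma DD_nonneg: "finite A \<Longrightarrow> A \<noteq> {} \<Longrightarrow> DD n y A \<ge> 0"
  using DD_ex[of A n y] dist_h_nonneg by auto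

lemma Phi_nonneg: "Phi n S l A \<ge> 0"
  unfolding Phi_def by (intro sum_nonneg) auto



lemma per_s_alg:
  fixes b c T X e PA PB :: real
  assumes b: "b > 0" and c: "0 \<le> c" "c \<le> b" and e: "e \<ge> 1" and T: "T \<ge> 0"
    and X: "b * PB \<le> X" and PB: "PB \<ge> 0"
    and T2: "T \<le> e * PB"
    and T1: "c > 0 \<Longrightarrow> T \<le> PA" and XA: "c > 0 \<Longrightarrow> c * PA \<le> X"
  shows "b * T \<le> X * (1 + e - e * c / b)"
proof -
  have X0: "X \<ge> 0" using X b PB by (meson mult_nonneg_nonneg less_imp_le order_trans)
  have eX: "b * T \<le> e * X"
  proof -
    have "b * T \<le> b * (e * PB)" using T2 b by (intro mult_left_mono) auto
    also have "\<dots> = e * (b * PB)" by simp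
    also have "\<dots> \<le> e * X" using X e by (intro mult_left_mono) auto
    finally show ?thesis .
  qed
  show ?thesis
  proof (cases "e * c < b")
    case True
    have "e * c / b \<le> 1" using True b by (simp add: divide_simps)
    then have "e \<le> 1 + e - e * c / b" by simp
    then have "e * X \<le> X * (1 + e - e * c / b)" using X0 by (simp add: mult.commute mult_left_mono)
    with eX show ?thesis by linarith
  next
    case False
    then have ec: "e * c \<ge> b" by simp
    have c0: "c > 0" using ec b e c(1) by (cases "c = 0") auto
    have PA: "PA \<le> X / c" using XA[OF c0] c0 by (simp add: field_simps)
    have "b * T \<le> b * (X / c)" using T1[OF c0] PA b by (intro mult_left_mono) auto
    also have "\<dots> = X * (b / c)" by simp
    also have "\<dots> \<le> X * (1 + e - e * c / b)"
    proof (intro mult_left_mono X0)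
      have "(b - c) * (e * c - b) \<ge> 0" using c ec by (intro mult_nonneg_nonneg) auto
      then have "b * b \<le> b * c + e * c * b - e * c * c" by (simp add: algebra_simps)
      then show "b / c \<le> 1 + e - e * c / b" using b c0 by (simp add: field_simps)
    qed
    finally show ?thesis .
  qed
qed

lemma final_alg:
  fixes a b K e X :: real
  assumes "b > 0" "e > 0" "X \<ge> 0"
  shows "X * (K * (1 + e) - e * a / b) * (a / b) \<le> X * (K^2 * ((1 + e)^2 / (4 * e)))"
proof -
  have "(e * (a / b)) * (K * (1 + e) - e * (a / b)) \<le> (K * (1 + e))^2 / 4"
    by (rule mult_const_minus_self_real_le)
  then have "(K * (1 + e) - e * a / b) * (a / b) \<le> K^2 * ((1 + e)^2 / (4 * e))"
    using assms by (simp add: field_simps power2_eq_square)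
  from mult_left_mono[OF this assms(3)] show ?thesis by (simp only: mult.assoc)
qed

lemma key:
  assumes S: "finite S" "S \<noteq> {}" and d1: "\<And>u v. u \<in> S \<Longrightarrow> v \<in> S \<Longrightarrow> d0 u v \<le> 1"
    and l: "l \<ge> 0"
  shows "A \<subseteq> PP n S \<Longrightarrow> A \<noteq> {} \<Longrightarrow>
     real (card A) * Phi n S l A \<le> (real (card S)^2 * CC l) ^ n"
proof (induction n arbitrary: A)
  case 0
  have P0: "PP 0 S = {\<lambda>_. undefined}" unfolding PP_def by simp
  then have A: "A = {\<lambda>_. undefined}" using 0 by auto
  show ?case using A P0 unfolding Phi_def DD_def dist_h_def by simp
next
  case (Suc n)
  define K where "K = real (card S)"
  define X where "X = (K^2 * CC l) ^ n"
  define As where "As s = {f \<in> PP n S. f(n:=s) \<in> A}" for s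
  define B where "B = {f \<in> PP n S. \<exists>s\<in>S. f(n:=s) \<in> A}"
  have finP: "finite (PP m S)" for m using S finite_PP by auto
  have finA: "finite A" using Suc.prems finP finite_subset by blast
  have finB: "finite B" unfolding B_def using finP by auto
  have finAs: "finite (As s)" for s unfolding As_def using finP by auto
  have AsB: "s \<in> S \<Longrightarrow> As s \<subseteq> B" for s unfolding As_def B_def by auto
  have decomp: "g \<in> PP (Suc n) S \<Longrightarrow> \<exists>s\<in>S. \<exists>f\<in>PP n S. g = f(n:=s)" for g
    unfolding PP_Suc by auto
  obtain a0 where a0: "a0 \<in> A" using Suc.prems by auto
  then obtain s0 f0 where sf0: "s0 \<in> S" "f0 \<in> PP n S" "a0 = f0(n:=s0)"
    using decomp Suc.prems by blast
  have Bne: "B \<noteq> {}" unfolding B_def using sf0 a0 by auto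
  have IHB: "real (card B) * Phi n S l B \<le> X"
    unfolding X_def K_def by (rule Suc.IH) (use Bne in \<open>auto simp: B_def\<close>)
  have IHs: "As s \<noteq> {} \<Longrightarrow> real (card (As s)) * Phi n S l (As s) \<le> X" for s
    unfolding X_def K_def by (rule Suc.IH) (auto simp: As_def)
  define T where "T s = (\<Sum>f\<in>PP n S. exp (l * DD (Suc n) (f(n:=s)) A))" for s
  have bound1: "DD (Suc n) (f(n:=s)) A \<le> DD n f (As s)" if ne: "As s \<noteq> {}" for f s
  proof -
    obtain a' where a': "a' \<in> As s" "DD n f (As s) = dist_h n f a'"
      using DD_ex[OF finAs ne] by blast
    have "a'(n:=s) \<in> A" using a' unfolding As_def by auto
    then have "DD (Suc n) (f(n:=s)) A \<le> dist_h (Suc n) (f(n:=s)) (a'(n:=s))"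
      by (rule DD_le[OF finA])
    also have "\<dots> = DD n f (As s)" using a' by (simp add: dist_upd)
    finally show ?thesis .
  qed
  have bound2: "DD (Suc n) (f(n:=s)) A \<le> DD n f B + 1" if sS: "s \<in> S" for f s
  proof -
    obtain b where b: "b \<in> B" "DD n f B = dist_h n f b"
      using DD_ex[OF finB Bne] by blast
    then obtain s' where s': "s' \<in> S" "b(n:=s') \<in> A" unfolding B_def by auto
    have "DD (Suc n) (f(n:=s)) A \<le> dist_h (Suc n) (f(n:=s)) (b(n:=s'))"
      by (rule DD_le[OF finA s'(2)])
    also have "\<dots> = dist_h n f b + d0 s s'" by (simp add: dist_upd)
    also have "\<dots> \<le> DD n f B + 1" using b d1[OF sS s'(1)] by simp
    finally show ?thesis .
  qed
  have T1: "T s \<le> Phi n S l (As s)" if "As s \<noteq> {}" for s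
    unfolding T_def Phi_def
    by (intro sum_mono) (use bound1[OF that] l in \<open>auto intro: mult_left_mono\<close>)
  have T2: "T s \<le> exp l * Phi n S l B" if "s \<in> S" for s
  proof -
    have "T s \<le> (\<Sum>f\<in>PP n S. exp (l * (DD n f B + 1)))"
      unfolding T_def
      by (intro sum_mono) (use bound2[OF that] l in \<open>auto intro: mult_left_mono\<close>)
    also have "\<dots> = exp l * Phi n S l B"
      unfolding Phi_def sum_distrib_left
      by (intro sum.cong) (auto simp: algebra_simps exp_add)
    finally show ?thesis .
  qed
  have cardB: "real (card B) > 0" using finB Bne by (simp add: card_gt_0_iff)
  have per_s: "real (card B) * T s \<le> X * (1 + exp l - exp l * real (card (As s)) / real (card B))"
    if s: "s \<in> S" for s
  proof (rule per_s_alg[OF cardB _ _ _ _ IHB Phi_nonneg T2[OF s]])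
    show "0 \<le> real (card (As s))" by simp
    show "real (card (As s)) \<le> real (card B)" using card_mono[OF finB AsB[OF s]] by simp
    show "1 \<le> exp l" using l by simp
    show "0 \<le> T s" unfolding T_def by (intro sum_nonneg) auto
    show "T s \<le> Phi n S l (As s)" if "0 < real (card (As s))"
      using that by (intro T1) auto
    show "real (card (As s)) * Phi n S l (As s) \<le> X" if "0 < real (card (As s))"
      using that by (intro IHs) auto
  qed
  have cardA: "card A = (\<Sum>s\<in>S. card (As s))"
  proof -
    have img: "A = (\<lambda>(s, f). f(n:=s)) ` (SIGMA s:S. As s)"
    proof
      show "A \<subseteq> (\<lambda>(s, f). f(n:=s)) ` (SIGMA s:S. As s)"
      proof
        fix a assume a: "a \<in> A"
        then obtain s f where "s \<in> S" "f \<in> PP n S" "a = f(n:=s)"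
          using decomp Suc.prems by blast
        then show "a \<in> (\<lambda>(s, f). f(n:=s)) ` (SIGMA s:S. As s)"
          using a unfolding As_def by force
      qed
      show "(\<lambda>(s, f). f(n:=s)) ` (SIGMA s:S. As s) \<subseteq> A" unfolding As_def by auto
    qed
    have inj: "inj_on (\<lambda>(s, f). f(n:=s)) (SIGMA s:S. As s)"
      by (rule inj_on_subset[OF PP_inj]) (auto simp: As_def)
    have "card A = card (SIGMA s:S. As s)" using img card_image[OF inj] by simp
    also have "\<dots> = (\<Sum>s\<in>S. card (As s))" using S finAs by (simp add: card_SigmaI)
    finally show ?thesis .
  qed
  have PhiS: "Phi (Suc n) S l A = (\<Sum>s\<in>S. T s)"
    unfolding Phi_def T_def by (rule sum_PP_Suc)
  have "real (card B) * Phi (Suc n) S l A = (\<Sum>s\<in>S. real (card B) * T s)"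
    by (simp add: PhiS sum_distrib_left)
  also have "\<dots> \<le> (\<Sum>s\<in>S. X * (1 + exp l - exp l * real (card (As s)) / real (card B)))"
    by (intro sum_mono per_s)
  also have "\<dots> = X * (K * (1 + exp l) - exp l * real (card A) / real (card B))"
    unfolding K_def cardA
    by (simp add: sum_distrib_left sum_subtractf sum_divide_distrib[symmetric] algebra_simps)
  finally have main: "real (card B) * Phi (Suc n) S l A
      \<le> X * (K * (1 + exp l) - exp l * real (card A) / real (card B))" .
  have X0: "X \<ge> 0" unfolding X_def CC_def by simp
  have "real (card A) * Phi (Suc n) S l A
      = (real (card B) * Phi (Suc n) S l A) * (real (card A) / real (card B))"
    using cardB by simp
  also have "\<dots> \<le> X * (K * (1 + exp l) - exp l * real (card A) / real (card B))
                    * (real (card A) / real (card B))"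
    by (intro mult_right_mono main) auto
  also have "\<dots> \<le> X * (K^2 * ((1 + exp l)^2 / (4 * exp l)))"
    by (rule final_alg[OF cardB _ X0]) simp
  also have "\<dots> = (real (card S)^2 * CC l) ^ Suc n"
    unfolding X_def K_def CC_def by (simp add: algebra_simps)
  finally show ?case .
qed


lemma CC_le: assumes "l \<ge> 0" shows "CC l \<le> exp (l^2 / 4)"
proof -
  have h: "- l * (1/2) + ln (1 + (1/2) * (exp l - 1)) \<le> l^2 / 8"
    using Hoeffdings_lemma_aux[of l "1/2"] assms by simp
  have eq: "1 + (1/2) * (exp l - 1) = (1 + exp l) / 2" by (simp add: field_simps)
  have pos: "(1 + exp l) / 2 > 0" by (intro divide_pos_pos add_pos_pos) auto
  have "(1 + exp l) / 2 = exp (ln ((1 + exp l) / 2))" using pos by simp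
  also have "\<dots> \<le> exp (l/2 + l^2/8)" using h unfolding eq by simp
  finally have b: "(1 + exp l) / 2 \<le> exp (l/2 + l^2/8)" .
  have "((1 + exp l) / 2)^2 \<le> exp (l/2 + l^2/8) ^ 2"
    using b by (intro power_mono) (auto intro: add_nonneg_nonneg)
  also have "\<dots> = exp l * exp (l^2/4)"
    by (simp add: exp_add[symmetric] power2_eq_square field_simps)
  finally have "((1 + exp l) / 2)^2 \<le> exp l * exp (l^2/4)" .
  then show ?thesis unfolding CC_def by (simp add: field_simps power2_eq_square)
qed

theorem lemma6p2:
  fixes k r :: nat and A :: "(nat \<Rightarrow> complex) set" and x :: "nat \<Rightarrow> complex" and t :: real
  assumes "k \<ge> 1" and "r \<ge> 1"
    and "A \<subseteq> cube k r" and "x \<in> cube k r" and "t > 0"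
    and "diff_set r A \<inter> ball_h k r t x = {}"
  shows "real (card A) / real (card (cube k r)) \<le> exp (- (t ^ 2) / (4 * real r))"
proof (cases "A = {}")
  case True then show ?thesis by simp
next
  case False
  define S where "S = roots_unity k"
  have finS: "finite S" using finite_roots_unity[OF assms(1)] unfolding S_def roots_unity_def by simp
  have oneS: "1 \<in> S" unfolding S_def roots_unity_def by simp
  have Sne: "S \<noteq> {}" using oneS by auto
  have normS: "norm z = 1" if "z \<in> S" for z
    using that assms(1) power_eq_1_iff[of z k] unfolding S_def roots_unity_def by auto
  have invS: "inverse z \<in> S" if "z \<in> S" for z
    using that unfolding S_def roots_unity_def by (simp add: power_inverse)
  have mulS: "z * w \<in> S" if "z \<in> S" "w \<in> S" for z w
    using that unfolding S_def roots_unity_def by (simp add: power_mult_distrib)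
  have d1: "d0 u v \<le> 1" if "u \<in> S" "v \<in> S" for u v
  proof -
    have "cmod (u - v) \<le> cmod u + cmod v" by (rule norm_triangle_ineq4)
    then show ?thesis using normS[OF that(1)] normS[OF that(2)] unfolding d0_def by simp
  qed
  have cubeP: "cube k r = PP r S" by (simp add: cube_def PP_def S_def)
  define K where "K = real (card S)"
  have K0: "K > 0" unfolding K_def using finS Sne by (simp add: card_gt_0_iff)
  define N where "N = real (card (cube k r))"
  have NK: "N = K ^ r" unfolding N_def K_def cubeP using card_PP[OF finS] by simp
  have N0: "N > 0" using NK K0 by simp
  define l where "l = t / real r"
  have r0: "real r > 0" using assms(2) by simp
  have l0: "l \<ge> 0" unfolding l_def using assms(5) r0 by simp
  have Asub: "A \<subseteq> PP r S" using assms(3) cubeP by simp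
  have keyA: "real (card A) * Phi r S l A \<le> (K^2 * CC l) ^ r"
    unfolding K_def by (rule key[OF finS Sne d1 l0 Asub False])
  have finA: "finite A" using Asub finite_PP[OF finS] finite_subset by blast
  have xP: "x \<in> PP r S" using assms(4) cubeP by simp
  define m where "m a = (\<lambda>j\<in>{..<r}. a j * x j)" for a :: "nat \<Rightarrow> complex"
  define A' where "A' = m ` A"
  have mP: "m a \<in> PP r S" if "a \<in> A" for a
    using that Asub xP unfolding m_def PP_def by (auto intro!: mulS)
  have A'sub: "A' \<subseteq> PP r S" unfolding A'_def using mP by auto
  have injm: "inj_on m A"
  proof
    fix a b assume ab: "a \<in> A" "b \<in> A" "m a = m b"
    show "a = b"
    proof
      fix j
      show "a j = b j"
      proof (cases "j < r")
        case True
        have "a j * x j = b j * x j" using fun_cong[OF ab(3), of j] True unfolding m_def by simp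
        moreover have "x j \<in> S" using xP True unfolding PP_def by auto
        then have "x j \<noteq> 0" using normS[of "x j"] by auto
        ultimately show ?thesis by simp
      next
        case False
        then show ?thesis using ab Asub unfolding PP_def
          by (metis PiE_arb lessThan_iff subsetD)
      qed
    qed
  qed
  have cardA': "card A' = card A" unfolding A'_def using card_image[OF injm] .
  have far: "DD r (m a) A > t" if a: "a \<in> A" for a
  proof -
    obtain b where b: "b \<in> A" "DD r (m a) A = dist_h r (m a) b" using DD_ex[OF finA False] by blast
    define q where "q = quot_vec r a b"
    have qd: "q \<in> diff_set r A" unfolding q_def diff_set_def using a b by blast
    have qP: "q \<in> cube k r" unfolding cubeP q_def quot_vec_def PP_def
      using a b Asub by (auto intro!: mulS invS simp: PP_def)
    have qn: "\<not> dist_h r x q \<le> t" using qd qP assms(6) unfolding ball_h_def by blast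
    have "dist_h r (m a) b = dist_h r x q"
      unfolding dist_h_def
    proof (rule sum.cong)
      fix j assume j: "j \<in> {..<r}"
      have aS: "a j \<in> S" using a Asub j unfolding PP_def by auto
      have an: "norm (a j) = 1" using normS[OF aS] .
      have a0: "a j \<noteq> 0" using an by auto
      have "a j * x j - b j = a j * (x j - inverse (a j) * b j)" using a0 by (simp add: field_simps)
      then have "cmod (a j * x j - b j) = cmod (x j - inverse (a j) * b j)" using an by (simp add: norm_mult)
      then show "d0 (m a j) (b j) = d0 (x j) (q j)" using j unfolding d0_def m_def q_def quot_vec_def by simp
    qed simp
    then show ?thesis using b qn by simp
  qed
  have "real (card A) * exp (l * t) = (\<Sum>y\<in>A'. exp (l * t))" using cardA' by simp
  also have "\<dots> \<le> (\<Sum>y\<in>A'. exp (l * DD r y A))"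
  proof (rule sum_mono)
    fix y assume "y \<in> A'"
    then obtain a where "a \<in> A" "y = m a" unfolding A'_def by auto
    then show "exp (l * t) \<le> exp (l * DD r y A)" using far l0 by (auto intro: mult_left_mono less_imp_le)
  qed
  also have "\<dots> \<le> Phi r S l A" unfolding Phi_def
    by (rule sum_mono2[OF finite_PP[OF finS] A'sub]) auto
  finally have lb: "real (card A) * exp (l * t) \<le> Phi r S l A" .
  have cA0: "real (card A) \<ge> 0" by simp
  have "real (card A) * (real (card A) * exp (l * t)) \<le> real (card A) * Phi r S l A"
    using lb cA0 by (rule mult_left_mono)
  also have "\<dots> \<le> (K^2 * CC l) ^ r" by (rule keyA)
  also have "\<dots> = N^2 * CC l ^ r" unfolding NK by (simp add: power_mult_distrib power_mult[symmetric] mult.commute)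
  also have "\<dots> \<le> N^2 * exp (l^2/4) ^ r"
    using CC_le[OF l0] by (intro mult_left_mono power_mono) (auto simp: CC_def)
  finally have ineq: "real (card A)^2 * exp (l * t) \<le> N^2 * exp (l^2/4) ^ r" by (simp add: power2_eq_square mult.assoc)
  have "(real (card A) / N)^2 \<le> exp (l^2/4) ^ r * exp (- (l * t))"
    using ineq N0 by (simp add: power_divide field_simps exp_minus)
  also have "\<dots> = exp (real r * (l^2/4) - l * t)"
    by (subst exp_of_nat_mult[symmetric], subst exp_add[symmetric]) simp
  also have "\<dots> \<le> exp (- (t^2) / (4 * real r)) ^ 2"
  proof -
    have "real r * (l^2/4) - l * t = - (3 * t^2) / (4 * real r)"
      unfolding l_def using r0 by (simp add: field_simps power2_eq_square)
    also have "\<dots> \<le> 2 * (- (t ^ 2) / (4 * real r))"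
      using r0 by (simp add: field_simps)
    finally have "real r * (l^2/4) - l * t \<le> 2 * (- (t ^ 2) / (4 * real r))" .
    then have "exp (real r * (l^2/4) - l * t) \<le> exp (2 * (- (t ^ 2) / (4 * real r)))"
      by (simp only: exp_le_cancel_iff)
    also have "\<dots> = exp (- (t ^ 2) / (4 * real r)) ^ 2"
      unfolding power2_eq_square mult_2 by (rule exp_add)
    finally show ?thesis .
  qed
  finally have "(real (card A) / N)^2 \<le> exp (- (t^2) / (4 * real r)) ^ 2" .
  then have "real (card A) / N \<le> exp (- (t^2) / (4 * real r))"
    by (rule power2_le_imp_le) simp
  then show ?thesis unfolding N_def .
qed

end
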